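(* If there exists a natural number $n>60$ with $\sigma(n)\ge\exp(H_n)\log(H_n)$ (a counterexample to the Kaneko–Lagarias inequality), then the smallest such counterexample is a superabundant number. Consequently, the Kaneko–Lagarias inequality $\sigma(n)<\exp(H_n)\log(H_n)$ holds for all $n>60$ if and only if it holds for all superabundant $n>60$.
   Context: $\sigma(n)=\sum_{d\mid n}d$ is the sum-of-divisors function and $H_n=1+\frac12+\cdots+\frac1n$ is the $n$-th harmonic number. A natural number $n$ is superabundant if $\sigma(m)/m<\sigma(n)/n$ for all natural numbers $m<n$. *)

theory Defs
  imports "HOL-Analysis.Analysis"
begin

definition sigma :: "nat \<Rightarrow> nat" where
  "sigma n = (\<Sum>d | d dvd n. d)"

definition superabundant :: "nat \<Rightarrow> bool" where
  "superabundant n \<longleftrightarrow> n \<ge> 1 \<and>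
     (\<forall>m. 1 \<le> m \<and> m < n \<longrightarrow> real (sigma m) / real m < real (sigma n) / real n)"

definition KL_counterexample :: "nat \<Rightarrow> bool" where
  "KL_counterexample n \<longleftrightarrow> n > 60 \<and> real (sigma n) \<ge> exp (harm n) * ln (harm n)"

end

theory Submission
  imports Defs
begin


lemma alg:
  fixes k Hp a :: real
  assumes "k > 0" "Hp > 0" "a \<ge> 0" "(k+1)*Hp*a \<le> k*(k+2)"
  shows "a*(k+1) \<le> k*(1+1/(k+1))*(a + (1/(k+1))/Hp)"
proof -
  have "k*(1+1/(k+1))*(a + (1/(k+1))/Hp) = k*(k+2)/(k+1)*a + k*(k+2)/((k+1)^2*Hp)"
    using assms by (simp add: divide_simps power2_eq_square) (simp add: algebra_simps)
  moreover have "a*(k+1) = k*(k+2)/(k+1)*a + a/(k+1)"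
    using assms by (simp add: divide_simps power2_eq_square) (simp add: algebra_simps)
  moreover have "a/(k+1) \<le> k*(k+2)/((k+1)^2*Hp)"
  proof -
    have "a/(k+1) = ((k+1)*Hp*a)/((k+1)^2*Hp)" using assms by (simp add: divide_simps power2_eq_square)
    also have "\<dots> \<le> k*(k+2)/((k+1)^2*Hp)" using assms by (intro divide_right_mono) auto
    finally show ?thesis .
  qed
  ultimately show ?thesis by linarith
qed

lemma Lbound:
  fixes t :: real assumes "t \<ge> 62"
  shows "ln t * (1 + ln t) \<le> t - 2"
proof -
  define q where "q = sqrt (sqrt t)"
  have q0: "q > 0" using assms by (simp add: q_def)
  have q4: "q^4 = t"
  proof -
    have "q^4 = (q^2)^2" by simp
    also have "q^2 = sqrt t" using assms by (simp add: q_def)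
    finally show ?thesis using assms by simp
  qed
  have lt: "ln t = 4 * ln q" using q4 q0 by (metis ln_realpow of_nat_numeral)
  have lq: "ln q \<le> q - 1" using q0 by (rule ln_le_minus_one)
  have lq0: "ln q \<ge> 0"
  proof -
    have "0 < ln t" using assms by simp
    then show ?thesis using lt by linarith
  qed
  have q28: "q \<ge> 2.8"
  proof (rule ccontr)
    assume "\<not> q \<ge> 2.8"
    then have "q^4 < 2.8^4" using q0 by (intro power_strict_mono) auto
    moreover have "(2.8::real)^4 < 62" by (simp add: power4_eq_xxxx)
    ultimately show False using q4 assms by simp
  qed
  have "ln t * (1 + ln t) \<le> (4*(q-1)) * (1 + 4*(q-1))"
    using lt lq lq0 by (intro mult_mono) auto
  also have "\<dots> \<le> q^4 - 2"
  proof -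
    define d where "d = q - 2.8"
    have d0: "d \<ge> 0" using q28 by (simp add: d_def)
    have qd: "q = d + 14/5" by (simp add: d_def)
    have "q^4 - 2 - (4*(q-1)) * (1 + 4*(q-1)) = 266/625 + 3276/125*d + 776/25*d^2 + 56/5*d^3 + d^4"
      unfolding qd by (simp add: field_simps power2_eq_square power3_eq_cube power4_eq_xxxx)
    moreover have "0 \<le> 266/625 + 3276/125*d + 776/25*d^2 + 56/5*d^3 + d^4" using d0 by simp
    ultimately show ?thesis by linarith
  qed
  finally show ?thesis using q4 by simp
qed



lemma exp_lb: fixes x :: real assumes "x \<ge> 0" shows "(\<Sum>k<N. x^k / fact k) \<le> exp x"
proof -
  have "(\<Sum>k<N. x^k / fact k) \<le> (\<Sum>k. x^k / fact k)"
    using assms summable_exp[of x] by (intro sum_le_suminf) (auto simp: divide_simps)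
  also have "\<dots> = exp x" by (simp add: exp_def field_simps)
  finally show ?thesis .
qed

lemma harm_lower:
  assumes "n > 0"
  shows "harm n \<ge> euler_mascheroni + ln (real n + 1) - 1/(2*real n)"
proof -
  have "euler_mascheroni \<le> harm (Suc (n-1)) - ln (real (n - 1 + 2)) + 1/real (2*(n-1+1))"
    by (rule euler_mascheroni_upper)
  moreover have "Suc (n-1) = n" "real (n-1+2) = real n + 1" "real (2*(n-1+1)) = 2 * real n"
    using assms by auto
  ultimately show ?thesis by (simp add: add.commute)
qed

lemma harm_upper:
  assumes "n > 0"
  shows "harm n \<le> 1 + ln (real n)"
  using euler_mascheroni_sequence_decreasing[of 1 n] assms by (simp add: harm_expand)

lemma ln2_lb: "ln (2::real) \<ge> 693/1000"
proof -
  have "ln (2::real) \<in> {(\<Sum>k<3. 2*((2-1)/(2+1))^(2*k+1) / of_nat (2*k+1))..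
     (\<Sum>k<3. 2*((2-1)/(2+1))^(2*k+1) / of_nat (2*k+1)) + 2*(((2-1)/(2+1))^(2*3+1) / (1 - ((2-1)/(2+1))^2) / of_nat (2*3+1))}"
    by (rule ln_approx_bounds) simp
  then show ?thesis by (simp add: eval_nat_numeral)
qed

lemma ln3_lb: "ln (3::real) \<ge> 1098/1000"
proof -
  have "ln (3::real) \<in> {(\<Sum>k<5. 2*((3-1)/(3+1))^(2*k+1) / of_nat (2*k+1))..
     (\<Sum>k<5. 2*((3-1)/(3+1))^(2*k+1) / of_nat (2*k+1)) + 2*(((3-1)/(3+1))^(2*5+1) / (1 - ((3-1)/(3+1))^2) / of_nat (2*5+1))}"
    by (rule ln_approx_bounds) simp
  then show ?thesis by (simp add: eval_nat_numeral)
qed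

lemma ln_h0_lb: "ln (971/200::real) \<ge> 1579/1000"
proof -
  define x :: real where "x = 971/200"
  have "ln x \<in> {(\<Sum>k<8. 2*((x-1)/(x+1))^(2*k+1) / of_nat (2*k+1))..
     (\<Sum>k<8. 2*((x-1)/(x+1))^(2*k+1) / of_nat (2*k+1)) + 2*(((x-1)/(x+1))^(2*8+1) / (1 - ((x-1)/(x+1))^2) / of_nat (2*8+1))}"
    by (rule ln_approx_bounds) (simp add: x_def)
  then show ?thesis by (simp add: eval_nat_numeral x_def)
qed

lemma exp_h0_lb: "exp (971/200::real) \<ge> 128"
proof -
  have "(\<Sum>k<20. (971/200::real)^k / fact k) \<le> exp (971/200)" by (rule exp_lb) simp
  moreover have "(\<Sum>k<20. (971/200::real)^k / fact k) \<ge> 128" by (simp add: eval_nat_numeral)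
  ultimately show ?thesis by linarith
qed


definition KLF :: "nat \<Rightarrow> real" where
  "KLF n = exp (harm n) * ln (harm n)"

lemma sigma_alt: "n > 0 \<Longrightarrow> sigma n = (\<Sum>d\<in>{1..n}. if d dvd n then d else 0)"
proof -
  assume n: "n > 0"
  have "{d. d dvd n} = {d\<in>{1..n}. d dvd n}"
    using n by (auto intro: dvd_imp_le simp: Suc_le_eq intro!: Nat.gr0I)
  then have "sigma n = sum (\<lambda>d. d) {d\<in>{1..n}. d dvd n}" unfolding sigma_def by simp
  also have "\<dots> = (\<Sum>d\<in>{1..n}. if d dvd n then d else 0)" by (rule sum.inter_filter) simp
  finally show ?thesis .
qed

lemma sig60_aux: "\<forall>m\<in>{1..60::nat}. 5 * (\<Sum>d\<in>{1..m}. if d dvd m then d else 0) \<le> 14*m"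
  by code_simp

lemma sig71_aux: "\<forall>m\<in>{61..71::nat}. 3 * (\<Sum>d\<in>{1..m}. if d dvd m then d else 0) < 7*(m+1)"
  by code_simp

lemma sig60: "1 \<le> m \<Longrightarrow> m \<le> 60 \<Longrightarrow> real (sigma m) / real m \<le> 14/5"
proof -
  assume a: "1 \<le> m" "m \<le> 60"
  then have "5 * sigma m \<le> 14 * m" using sig60_aux sigma_alt[of m] by auto
  then have "5 * real (sigma m) \<le> 14 * real m" by linarith
  then show ?thesis using a by (simp add: divide_simps)
qed

lemma sig71: "61 \<le> m \<Longrightarrow> m \<le> 71 \<Longrightarrow> 3 * real (sigma m) < 7 * (real m + 1)"
proof -
  assume a: "61 \<le> m" "m \<le> 71"
  then have "3 * sigma m < 7 * (m+1)" using sig71_aux sigma_alt[of m] by auto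
  then have "real (3 * sigma m) < real (7 * (m+1))" by (simp only: of_nat_less_iff)
  then show ?thesis by simp
qed

lemma KLF_step:
  assumes k: "61 \<le> k"
  shows "KLF k / real k \<le> KLF (Suc k) / real (Suc k)"
proof -
  define H :: real where "H = harm k"
  define x :: real where "x = 1 / (real k + 1)"
  define Hp :: real where "Hp = harm (Suc k)"
  define L where "L = ln (real k + 1)"
  have Hp: "Hp = H + x" unfolding Hp_def H_def x_def by (simp add: harm_Suc inverse_eq_divide)
  have x0: "x > 0" by (simp add: x_def)
  have "harm 2 \<le> H" unfolding H_def using k by (intro harm_mono) simp
  then have H32: "H \<ge> 3/2" by (simp add: harm_expand)
  have lnH0: "ln H > 0" using H32 by simp
  have Hp_up: "Hp \<le> 1 + L" unfolding Hp_def L_def using harm_upper[of "Suc k"] by (simp add: add.commute)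
  have "ln H \<le> H - 1" using H32 by (intro ln_le_minus_one) simp
  then have lnH_L: "ln H \<le> L" using Hp Hp_up x0 by linarith
  have LL: "L * (1 + L) \<le> real k + 1 - 2" unfolding L_def using k by (intro Lbound) simp
  have L0: "L \<ge> 0" unfolding L_def by simp
  have Hp0: "Hp > 0" using Hp H32 x0 by linarith
  have "Hp * ln H \<le> (1 + L) * L" using Hp_up lnH_L lnH0 Hp0 L0 by (intro mult_mono) auto
  then have "(real k + 1) * (Hp * ln H) \<le> (real k + 1) * ((1 + L) * L)" by (intro mult_left_mono) auto
  also have "\<dots> \<le> (real k + 1) * (real k - 1)" using LL by (intro mult_left_mono) (auto simp: algebra_simps)
  also have "\<dots> \<le> real k * (real k + 2)" by (simp add: algebra_simps)
  finally have key: "(real k + 1) * Hp * ln H \<le> real k * (real k + 2)" by (simp add: mult.assoc)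
  have alg1: "ln H * (real k + 1) \<le> real k * (1 + x) * (ln H + x / Hp)"
    using alg[of "real k" Hp "ln H"] key k Hp0 lnH0 by (simp add: x_def)
  have "ln (H / Hp) \<le> H / Hp - 1" using H32 Hp0 by (intro ln_le_minus_one) simp
  moreover have "ln (H / Hp) = ln H - ln Hp" using H32 Hp0 by (simp add: ln_div)
  moreover have "H / Hp - 1 = - (x / Hp)" using Hp0 Hp by (simp add: field_simps)
  ultimately have lnHp: "ln H + x / Hp \<le> ln Hp" by linarith
  have eHp: "exp H * (1 + x) \<le> exp Hp"
    unfolding Hp exp_add by (intro mult_left_mono) (auto simp: exp_ge_add_one_self add.commute)
  have kpos: "real k > 0" using k by simp
  have "KLF k / real k = exp H * (ln H * (real k + 1)) / (real k * (real k + 1))"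
  proof -
    have "exp H * (ln H * (real k + 1)) / (real k * (real k + 1)) = (exp H * ln H * (real k + 1)) / (real k * (real k + 1))"
      by (simp add: mult.assoc)
    also have "\<dots> = exp H * ln H / real k"
      using kpos by (intro nonzero_mult_divide_mult_cancel_right) simp
    finally show ?thesis unfolding KLF_def H_def by simp
  qed
  also have "\<dots> \<le> exp H * (real k * (1 + x) * (ln H + x / Hp)) / (real k * (real k + 1))"
    using alg1 kpos by (intro divide_right_mono mult_left_mono) auto
  also have "\<dots> = ((exp H * (1 + x)) * (ln H + x / Hp) * real k) / ((real k + 1) * real k)"
    by (simp add: mult_ac)
  also have "\<dots> = (exp H * (1 + x)) * (ln H + x / Hp) / (real k + 1)"
    using kpos by (intro nonzero_mult_divide_mult_cancel_right) simp
  also have "\<dots> \<le> exp Hp * ln Hp / (real k + 1)"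
    using eHp lnHp x0 lnH0 Hp0 by (intro divide_right_mono mult_mono) auto
  also have "\<dots> = KLF (Suc k) / real (Suc k)" unfolding KLF_def Hp_def by (simp add: add.commute)
  finally show ?thesis .
qed

lemma KLF_mono:
  assumes "61 \<le> a" "a \<le> b"
  shows "KLF a / real a \<le> KLF b / real b"
  using assms(2)
proof (induction b rule: dec_induct)
  case base then show ?case by simp
next
  case (step n)
  then show ?case using KLF_step[of n] assms(1) by linarith
qed

lemma KLF72: "KLF 72 / 72 > 14/5"
proof -
  have g: "euler_mascheroni > (19/33::real)" by (rule euler_mascheroni_gt_19_over_33)
  have h1: "harm 72 \<ge> euler_mascheroni + ln (73::real) - 1/144"
    using harm_lower[of 72] by simp
  have "ln (72/73::real) \<le> 72/73 - 1" by (intro ln_le_minus_one) simp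
  then have l73: "ln (73::real) \<ge> ln 72 + 1/73" by (simp add: ln_div)
  have "ln (72::real) = ln (2^3 * 3^2)" by simp
  also have "\<dots> = 3 * ln 2 + 2 * ln 3" by (simp only: ln_mult ln_realpow) simp_all
  finally have l72: "ln (72::real) = 3 * ln 2 + 2 * ln 3" .
  have H: "harm 72 \<ge> (971/200::real)" using h1 l73 l72 ln2_lb ln3_lb g by linarith
  have "exp (harm 72) \<ge> exp (971/200::real)" using H by simp
  then have e: "exp (harm 72) \<ge> (128::real)" using exp_h0_lb by linarith
  have "ln (harm 72) \<ge> ln (971/200::real)" using H by simp
  then have l: "ln (harm 72) \<ge> (1579/1000::real)" using ln_h0_lb by linarith
  have "exp (harm 72) * ln (harm 72) \<ge> 128 * (1579/1000::real)"
    using e l by (intro mult_mono) auto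
  then show ?thesis unfolding KLF_def by simp
qed

lemma KL_small:
  assumes "61 \<le> m" "m \<le> 71"
  shows "real (sigma m) < KLF m"
proof -
  define c :: real where "c = 19/33 - 1/122"
  have g: "euler_mascheroni > (19/33::real)" by (rule euler_mascheroni_gt_19_over_33)
  have "1/(2*real m) \<le> 1/122" using assms by (simp add: divide_simps)
  then have h: "harm m \<ge> c + ln (real m + 1)" using harm_lower[of m] assms g unfolding c_def by linarith
  have "(\<Sum>k<5. c^k / fact k) \<le> exp c" by (rule exp_lb) (simp add: c_def)
  moreover have "(\<Sum>k<5. c^k / fact k) \<ge> 7/4" by (simp add: c_def eval_nat_numeral)
  ultimately have ec: "exp c \<ge> 7/4" by linarith
  have "exp (harm m) \<ge> exp (c + ln (real m + 1))" using h by simp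
  also have "exp (c + ln (real m + 1)) = exp c * (real m + 1)" by (simp add: exp_add)
  finally have e: "exp (harm m) \<ge> 7/4 * (real m + 1)"
    using ec by (smt (verit) mult_right_mono of_nat_0_le_iff)
  have "ln (real m + 1) \<ge> ln 48" using assms by simp
  moreover have "ln (48::real) = 4 * ln 2 + ln 3"
  proof -
    have "ln (48::real) = ln (2^4 * 3)" by simp
    also have "\<dots> = 4 * ln 2 + ln 3" by (simp only: ln_mult ln_realpow) simp_all
    finally show ?thesis .
  qed
  ultimately have H4: "harm m \<ge> (4::real)" using h ln2_lb ln3_lb unfolding c_def by linarith
  have hp: "harm m > (0::real)" using H4 by linarith
  have "ln (harm m) \<ge> ln (4::real)" using H4 hp by (subst ln_le_cancel_iff) auto
  moreover have "ln (4::real) = 2 * ln 2"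
    using ln_realpow[of 2 2] by simp
  ultimately have l: "ln (harm m :: real) \<ge> 4/3" using ln2_lb by linarith
  have "KLF m \<ge> 7/4 * (real m + 1) * (4/3)" unfolding KLF_def
    using e l by (intro mult_mono) auto
  then show ?thesis using sig71[OF assms] by linarith
qed

theorem mainTheorem19:
  shows "((\<exists>n. KL_counterexample n) \<longrightarrow> superabundant (LEAST n. KL_counterexample n))
     \<and> ((\<forall>n>60. real (sigma n) < exp (harm n) * ln (harm n)) \<longleftrightarrow>
        (\<forall>n>60. superabundant n \<longrightarrow> real (sigma n) < exp (harm n) * ln (harm n)))"
proof -
  have P1: "superabundant (LEAST n. KL_counterexample n)" if ex: "\<exists>n. KL_counterexample n"
  proof -
    define N where "N = (LEAST n. KL_counterexample n)"
    have KN: "KL_counterexample N" unfolding N_def using ex by (rule LeastI_ex)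
    have minN: "\<not> KL_counterexample k" if "k < N" for k
      using that not_less_Least unfolding N_def by blast
    have N60: "N > 60" and FN: "KLF N \<le> real (sigma N)"
      using KN unfolding KL_counterexample_def KLF_def by auto
    have Npos: "real N > 0" using N60 by simp
    have FN': "KLF N / real N \<le> real (sigma N) / real N"
      using FN Npos by (simp add: divide_right_mono)
    have "real (sigma m) / real m < real (sigma N) / real N" if m: "1 \<le> m" "m < N" for m
    proof (rule ccontr)
      assume "\<not> ?thesis"
      then have le: "real (sigma N) / real N \<le> real (sigma m) / real m" by simp
      have mpos: "real m > 0" using m by simp
      show False
      proof (cases "m \<ge> 61")
        case True
        have "KLF m / real m \<le> KLF N / real N" using KLF_mono[OF True] m by simp
        then have "KLF m / real m \<le> real (sigma m) / real m" using FN' le by linarith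
        then have "KLF m \<le> real (sigma m)" using mpos by (simp add: divide_right_mono_neg divide_le_cancel)
        then have "KL_counterexample m" using True unfolding KL_counterexample_def KLF_def by auto
        then show False using minN m by blast
      next
        case False
        then have s: "real (sigma m) / real m \<le> 14/5" using sig60 m by simp
        show False
        proof (cases "N \<ge> 72")
          case True
          have "KLF 72 / 72 \<le> KLF N / real N" using KLF_mono[of 72 N] True by simp
          then show ?thesis using KLF72 FN' le s by linarith
        next
          case False
          then show ?thesis using KL_small[of N] N60 FN by simp
        qed
      qed
    qed
    then show ?thesis unfolding superabundant_def N_def[symmetric] using N60 by auto
  qed
  have P2: "(\<forall>n>60. real (sigma n) < exp (harm n) * ln (harm n))"
    if H: "\<forall>n>60. superabundant n \<longrightarrow> real (sigma n) < exp (harm n) * ln (harm n)"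
  proof (rule ccontr)
    assume "\<not> ?thesis"
    then have ex: "\<exists>n. KL_counterexample n" unfolding KL_counterexample_def by (auto simp: not_less)
    define N where "N = (LEAST n. KL_counterexample n)"
    have KN: "KL_counterexample N" unfolding N_def using ex by (rule LeastI_ex)
    have "superabundant N" using P1[OF ex] unfolding N_def .
    then show False using H KN unfolding KL_counterexample_def by force
  qed
  show ?thesis using P1 P2 by blast
qed

end
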